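(* Let $n>2$, $V=\mathbb{F}_2^n$, let $g\in\mathrm{Sym}(V)$ and let $W\le V$ be such that $\sigma_W=T\cap T^g$. If $\dim(W)=n-2$, then $T^g<\mathrm{AGL}(V)$.
   Context: $T=\{\sigma_v: v\in V\}\le\mathrm{Sym}(V)$ is the group of translations $\sigma_v:x\mapsto x+v$; $\sigma_W=\{\sigma_w:w\in W\}$; $T^g=g^{-1}Tg$. $\mathrm{AGL}(V)$ is the affine group of maps $x\mapsto xL+v$, $L\in\mathrm{GL}(V)$, $v\in V$ (the normaliser of $T$ in $\mathrm{Sym}(V)$). *)

theory Defs
  imports "HOL-Analysis.Analysis" "HOL-Library.Z2"
begin

text \<open>V = F_2^n is modelled as bit ^ 'n with n = CARD('n).
Right actions as in the paper: x^(gh) = (x^g)^h, so the conjugate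
g^-1 s g (apply g^-1, then s, then g) is the function g o s o inv g.\<close>

definition transl :: "'a::plus \<Rightarrow> 'a \<Rightarrow> 'a" where
  "transl v = (\<lambda>x. x + v)"

definition Transl :: "('a::plus \<Rightarrow> 'a) set" where
  "Transl = range transl"

definition conj_perm :: "('a \<Rightarrow> 'a) \<Rightarrow> ('a \<Rightarrow> 'a) set \<Rightarrow> ('a \<Rightarrow> 'a) set" where
  "conj_perm g S = (\<lambda>s. g \<circ> s \<circ> inv g) ` S"

definition AGL :: "('a::comm_ring_1 ^ 'n \<Rightarrow> 'a ^ 'n) set" where
  "AGL = {f. \<exists>(L::'a^'n^'n) v. invertible L \<and> f = (\<lambda>x. x v* L + v)}"

end

theory Submission
  imports Defs
begin


lemma bit_add_self[simp]: "(x::bit^'n) + x = 0"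
  proof -
  have "(a::bit) + a = 0" for a by (cases a) simp_all
  then show ?thesis by (simp add: vec_eq_iff)
qed

lemma inv_transpose_gen:
  fixes A :: "'a::field^'n^'n"
  assumes "invertible A" shows "invertible (transpose A)"
  by (meson assms invertible_def matrix_left_right_inverse right_invertible_transpose)

lemma bit_add_self2[simp]: "(x::bit^'n) + (x + y) = y"
  by (metis add.assoc add_0 bit_add_self)

lemma bit_uminus[simp]: "- (x::bit^'n) = x"
  by (metis add_right_imp_eq bit_add_self left_minus)

lemma bit_minus: "(x::bit^'n) - y = x + y"
  by simp

lemma AGL_I:
  fixes f :: "bit^'n \<Rightarrow> bit^'n"
  assumes inj: "inj f" and add: "\<And>x y. f (x+y) + f 0 = f x + f y"
  shows "f \<in> AGL"
proof -
  define h where "h x = f x + f 0" for x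
  have hadd: "h (x+y) = h x + h y" for x y
  proof -
    have "h x + h y = f x + f y" unfolding h_def by (simp add: add_ac)
    then show ?thesis using add[of x y] unfolding h_def by simp
  qed
  have hsc: "h (c *s x) = c *s h x" for c x
  proof (cases c)
    case zero
    then show ?thesis by (simp add: h_def)
  next
    case one
    then show ?thesis by simp
  qed
  have lin: "Vector_Spaces.linear (*s) (*s) h"
    by unfold_locales (simp_all add: hadd hsc)
  define A where "A = matrix h"
  have Ah: "A *v x = h x" for x using matrix_works[OF lin] A_def by simp
  have "inj h" using inj unfolding h_def inj_def by auto
  then have "inj ((*v) A)" using Ah by (simp add: inj_def)
  then have "invertible A" using matrix_left_invertible_injective invertible_left_inverse by blast
  then have iL: "invertible (transpose A)" by (rule inv_transpose_gen)
  have "f = (\<lambda>x. x v* transpose A + f 0)"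
    by (rule ext) (simp add: Ah h_def add.assoc)
  then show ?thesis unfolding AGL_def using iL by blast
qed


lemma span_lemma:
  fixes W :: "(bit^'n) set"
  assumes sub: "vec.subspace W" and dimW: "vec.dim W = CARD('n) - 2" and n: "CARD('n) > 2"
    and u: "u \<notin> W" and x1: "x \<notin> W" and x2: "x + u \<notin> W"
  shows "z \<in> W \<or> z + u \<in> W \<or> z + x \<in> W \<or> z + u + x \<in> W"
proof -
  have spW: "vec.span W = W" using sub by simp
  have d1: "vec.dim (insert u W) = vec.dim W + 1"
  proof -
    have "u \<notin> vec.span W" unfolding spW using u .
    then show ?thesis by (simp add: vec.dim_insert)
  qed
  have xs: "x \<notin> vec.span (insert u W)"
  proof
    assume "x \<in> vec.span (insert u W)"
    then obtain k where "x - k *s u \<in> W" using vec.span_insert[of u W] spW by auto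
    then show False using x1 x2 by (cases k) (auto simp: bit_minus)
  qed
  have "vec.dim (insert x (insert u W)) = CARD('n)"
    using xs d1 vec.dim_insert[of x "insert u W"] dimW n by simp
  then have "vec.span (insert x (insert u W)) = UNIV"
    using vec.dim_eq_full[of "insert x (insert u W)"] by (simp add: card_cart_basis vec.dimension_def)
  then have "z \<in> vec.span (insert x (insert u W))" by simp
  then obtain k where "z - k *s x \<in> vec.span (insert u W)" using vec.span_insert by blast
  then obtain k' where "z - k *s x - k' *s u \<in> W" using vec.span_insert[of u W] spW by auto
  then show ?thesis by (cases k; cases k') (auto simp: bit_minus add_ac)
qed

definition tau :: "(bit^'n \<Rightarrow> bit^'n) \<Rightarrow> bit^'n \<Rightarrow> bit^'n \<Rightarrow> bit^'n" where
  "tau g v = g \<circ> transl v \<circ> inv g"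

lemma tau_app: "bij g \<Longrightarrow> tau g v (tau g v' x) = tau g (v + v') x"
  by (simp add: tau_def transl_def bij_is_inj add_ac)

lemma tau_comm: "bij g \<Longrightarrow> tau g v (tau g v' x) = tau g v' (tau g v x)"
  by (simp add: tau_app add.commute)

lemma tau_fix: "bij g \<Longrightarrow> tau g v y = y \<Longrightarrow> v = 0"
proof -
  assume b: "bij g" and f: "tau g v y = y"
  then have "g (inv g y + v) = g (inv g y)" by (simp add: tau_def transl_def bij_is_surj surj_f_inv_f)
  then have "inv g y + v = inv g y" using b by (meson bij_is_inj injD)
  then show "v = 0" by simp
qed

lemma tau_0: "bij g \<Longrightarrow> tau g 0 x = x"
  by (simp add: tau_def transl_def bij_is_surj surj_f_inv_f)

lemma tau_inv: "bij g \<Longrightarrow> tau g v (tau g v x) = x"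
  by (simp add: tau_app tau_0)

lemma conj_eq: "conj_perm g Transl = range (tau g)"
  unfolding conj_perm_def Transl_def tau_def by auto

lemma tau_AGL:
  fixes g :: "bit ^ 'n \<Rightarrow> bit ^ 'n" and W :: "(bit ^ 'n) set"
  assumes n: "CARD('n) > 2"
    and b: "bij g"
    and sub: "vec.subspace W"
    and hW: "\<And>w. w \<in> W \<Longrightarrow> \<exists>v'. transl w = tau g v'"
    and dimW: "vec.dim W = CARD('n) - 2"
  shows "tau g v \<in> AGL"
proof -
  define t where "t = tau g v"
  have tinv: "t (t x) = x" for x using tau_inv[OF b] t_def by simp
  have C1: "t (y + w) = t y + w" if wW: "w \<in> W" for y w
  proof -
    obtain v' where v': "transl w = tau g v'" using hW[OF wW] by blast
    have "t (y + w) = t (tau g v' y)" using v' by (metis transl_def)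
    also have "\<dots> = tau g v' (t y)" using tau_comm[OF b] t_def by simp
    also have "\<dots> = t y + w" using v' by (metis transl_def)
    finally show ?thesis .
  qed
  have C2: "t x = x + w" if wW: "w \<in> W" and fy: "t y + w = y" for x y w
  proof -
    obtain v' where v': "transl w = tau g v'" using hW[OF wW] by blast
    have "tau g v' (t y) = y" using v' fy by (metis transl_def)
    then have "tau g (v' + v) y = y" using tau_app[OF b] t_def by simp
    then have "v' + v = 0" using tau_fix[OF b] by blast
    then have "tau g v' (t x) = x" using tau_app[OF b] tau_0[OF b] t_def by simp
    then have "t x + w = x" using v' by (metis transl_def)
    then show ?thesis by (metis bit_add_self2 add.commute)
  qed
  define c where "c y = t y + y" for y
  have inj: "inj t" by (metis injI tinv)
  have "\<forall>x y. t (x + y) + t 0 = t x + t y"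
  proof (cases "\<exists>y. c y \<in> W")
    case True
    then obtain y where y: "c y \<in> W" by blast
    have "t y + c y = y" unfolding c_def by (metis add.assoc add_0 bit_add_self)
    then have "t x = x + c y" for x using C2 y by blast
    then show ?thesis by (simp add: add_ac)
  next
    case False
    define u where "u = c 0"
    have t0: "t 0 = u" unfolding u_def c_def by simp
    have uW: "u \<notin> W" using False u_def by blast
    have B1: "c (y + w) = c y" if "w \<in> W" for y w
      unfolding c_def C1[OF that] by (simp add: add_ac)
    have B2: "c (t y) = c y" for y unfolding c_def using tinv by (simp add: add.commute)
    have B3': "c y = u" if "y \<in> W" for y using B1[OF that, of 0] u_def by simp
    have B3: "c y = u" if "y + u \<in> W" for y
    proof -
      have "c y = c (u + (y + u))" by (simp add: add_ac)
      also have "\<dots> = c u" by (rule B1[OF that])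
      also have "\<dots> = u" using B2[of 0] t0 u_def by simp
      finally show ?thesis .
    qed
    have B4: "c y + u \<in> W" for y
    proof (cases "y \<in> W \<or> y + u \<in> W")
      case True
      then have "c y = u" using B3 B3' by blast
      then show ?thesis using sub vec.subspace_0 by simp
    next
      case F: False
      have "c y \<in> W \<or> c y + u \<in> W \<or> c y + y \<in> W \<or> c y + u + y \<in> W"
        using span_lemma[OF sub dimW n uW] F by blast
      moreover have "c y + y = t y" "c y + u + y = t y + u" unfolding c_def by (simp_all add: add_ac)
      ultimately have "c y \<in> W \<or> c y + u \<in> W \<or> c (t y) = u"
        using B3 B3' by metis
      then show ?thesis using False B2 sub vec.subspace_0 by force
    qed
    have B5: "c (y + u) = c y" for y
    proof -
      define w0 where "w0 = c y + u"
      have e: "y + u = t y + w0" unfolding w0_def c_def by (simp add: add_ac)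
      have "c (y + u) = c (t y + w0)" by (simp only: e)
      also have "\<dots> = c (t y)" using B1 B4 w0_def by blast
      finally have "c (y + u) = c (t y)" .
      then show ?thesis using B2 by simp
    qed
    have goal: "c (x + y) + u = c x + c y" for x y
    proof -
      have sym: "c (x + y) + u = c x + c y" if "x \<in> W \<or> x + u \<in> W" for x y
      proof -
        have cx: "c x = u" using that B3 B3' by blast
        have "c (x + y) = c y"
        proof (cases "x \<in> W")
          case True then show ?thesis using B1[OF True, of y] by (simp add: add.commute)
        next
          case False
          then have xu: "x + u \<in> W" using that by blast
          have "c (x + y) = c ((y + u) + (x + u))" by (simp add: add_ac)
          also have "\<dots> = c (y + u)" by (rule B1[OF xu])
          finally show ?thesis using B5 by simp
        qed
        then show ?thesis using cx by (simp add: add.commute)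
      qed
      show ?thesis
      proof (cases "x \<in> W \<or> x + u \<in> W")
        case True then show ?thesis using sym by blast
      next
        case Fx: False
        show ?thesis
        proof (cases "y \<in> W \<or> y + u \<in> W")
          case True then show ?thesis using sym[of y x] by (simp add: add.commute)
        next
          case Fy: False
          have "y + x \<in> W \<or> y + u + x \<in> W"
            using span_lemma[OF sub dimW n uW, of x y] Fx Fy by blast
          then show ?thesis
          proof
            assume h: "y + x \<in> W"
            have "c y = c (x + (y + x))" by (simp add: add_ac)
            also have "\<dots> = c x" by (rule B1[OF h])
            finally have "c y = c x" .
            moreover have "c (x + y) = u" using B3' h by (simp add: add.commute)
            ultimately show ?thesis by simp
          next
            assume h: "y + u + x \<in> W"
            have "c y = c ((x + u) + (y + u + x))" by (simp add: add_ac)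
            also have "\<dots> = c (x + u)" by (rule B1[OF h])
            also have "\<dots> = c x" by (rule B5)
            finally have "c y = c x" .
            moreover have "c (x + y) = u" using B3 h by (simp add: add_ac)
            ultimately show ?thesis by simp
          qed
        qed
      qed
    qed
    show ?thesis
    proof (intro allI)
      fix x y
      have "t (x + y) = x + y + c (x + y)" "t x = x + c x" "t y = y + c y"
        unfolding c_def by (simp_all add: add_ac)
      then show "t (x + y) + t 0 = t x + t y" using goal[of x y] t0
        by (metis add.assoc add.left_commute)
    qed
  qed
  then show ?thesis using AGL_I[OF inj] t_def by blast
qed


theorem mainTheorem7:
  fixes g :: "bit ^ 'n \<Rightarrow> bit ^ 'n" and W :: "(bit ^ 'n) set"
  assumes "CARD('n) > 2"
    and "bij g"
    and "vec.subspace W"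
    and "transl ` W = Transl \<inter> conj_perm g Transl"
    and "vec.dim W = CARD('n) - 2"
  shows "conj_perm g Transl \<subset> AGL"
proof -
  have hW: "\<exists>v'. transl w = tau g v'" if "w \<in> W" for w
  proof -
    have "transl w \<in> conj_perm g Transl" using assms(4) that by blast
    then show ?thesis unfolding conj_eq by auto
  qed
  have sub: "conj_perm g Transl \<subseteq> AGL"
    unfolding conj_eq using tau_AGL[OF assms(1) assms(2) assms(3) hW assms(5)] by blast
  have "\<not> card (UNIV :: 'n set) \<le> Suc 0" using assms(1) by simp
  then obtain i j :: 'n where ij: "i \<noteq> j" using card_le_Suc0_iff_eq[of "UNIV :: 'n set"] by auto
  define a :: "bit^'n" where "a = axis j 1"
  define f where "f x = x + (x$i) *s a" for x
  have ai: "a $ i = 0" using ij unfolding a_def axis_def by simp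
  have fi: "(f x) $ i = x $ i" for x unfolding f_def using ai by simp
  have ff: "f (f x) = x" for x
  proof -
    have "f (f x) = f x + ((f x)$i) *s a" by (rule f_def)
    also have "\<dots> = x + (x$i) *s a + (x$i) *s a" unfolding fi by (simp only: f_def)
    finally have "f (f x) = x + (x$i) *s a + (x$i) *s a" .
    then show ?thesis by (simp add: add.assoc)
  qed
  have inj: "inj f" by (metis injI ff)
  have z: "f 0 = 0" by (simp add: f_def)
  have add: "f (x + y) + f 0 = f x + f y" for x y
  proof -
    have e: "(x+y)$i *s a = x$i *s a + y$i *s a"
      by (simp only: vector_add_component vector_sadd_rdistrib)
    show ?thesis unfolding f_def[of "x+y"] f_def[of x] f_def[of y] z e
      by (simp only: add_ac add_0_right add_0_left)
  qed
  have fA: "f \<in> AGL" by (rule AGL_I[OF inj add])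
  have fN: "f \<notin> conj_perm g Transl"
  proof
    assume "f \<in> conj_perm g Transl"
    then obtain v where v: "f = tau g v" unfolding conj_eq by auto
    have "tau g v 0 = 0" using v z by metis
    then have "v = 0" using tau_fix[OF assms(2)] by blast
    then have "f (axis i 1) = axis i 1" using v tau_0[OF assms(2)] by simp
    moreover have "f (axis i 1) = axis i 1 + a" unfolding f_def by simp
    moreover have "a \<noteq> 0" unfolding a_def by simp
    ultimately show False by (metis add_cancel_right_right)
  qed
  show ?thesis using sub fA fN by blast
qed

end
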